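(* For every $t\ge0$, every $n\ge1$ and every $\mathfrak{t}_n\in\mathbb{T}(n)$, $p_n(\mathfrak{t}_n)=\mathsf{P}_t[\tau_n=\mathfrak{t}_n]$.
   Context: McKean trees: $\mathbb{T}(1)=\{\mathfrak{t}_1\}$ (a single leaf) and for $n\ge2$, $\mathbb{T}(n)=\bigcup_{k=1}^{n-1}\mathbb{T}(k)\times\mathbb{T}(n-k)$; a tree $\mathfrak{t}_n=(\mathfrak{t}^l_n,\mathfrak{t}^r_n)$ has left subtree with $n_l$ leaves and right subtree with $n_r=n-n_l$ leaves, leaves numbered left to right. The germination $\mathfrak{t}_{n,k}\in\mathbb{T}(n+1)$, $k=1,\dots,n$, is obtained by replacing the $k$-th leaf of $\mathfrak{t}_n$ by the two-leaved tree $\mathfrak{t}_2=(\mathfrak{t}_1,\mathfrak{t}_1)$. Weights: $p_1(\mathfrak{t}_1)=1$ and $p_n(\mathfrak{t}_n)=\frac{1}{n-1}p_{n_l}(\mathfrak{t}^l_n)p_{n_r}(\mathfrak{t}^r_n)$ for $n\ge2$. $(\tau_n)_{n\ge1}$ is a random sequence, defined on a probability space with probability $\mathsf{P}_t$, with $\tau_n\in\mathbb{T}(n)$, which is Markov with $\mathsf{P}_t[\tau_1=\mathfrak{t}_1]=1$, $\mathsf{P}_t[\tau_{n+1}=\mathfrak{t}_{n,k}\mid\tau_n=\mathfrak{t}_n]=1/n$ for $k=1,\dots,n$, and $\mathsf{P}_t[\tau_{n+1}=\mathfrak{s}\mid\tau_n=\mathfrak{t}_n]=0$ if $\mathfrak{s}$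 is not a germination of $\mathfrak{t}_n$. *)

theory Defs
  imports "HOL-Probability.Probability"
begin

datatype mtree = Leaf | Node mtree mtree

fun leaves :: "mtree \<Rightarrow> nat" where
  "leaves Leaf = 1"
| "leaves (Node l r) = leaves l + leaves r"

definition McKean_trees :: "nat \<Rightarrow> mtree set" where
  "McKean_trees n = {t. leaves t = n}"

text \<open>Germination: replace the k-th leaf (leaves numbered 1.. left to right) by a two-leaved tree.\<close>

fun germ :: "mtree \<Rightarrow> nat \<Rightarrow> mtree" where
  "germ Leaf k = Node Leaf Leaf"
| "germ (Node l r) k =
     (if k \<le> leaves l then Node (germ l k) r else Node l (germ r (k - leaves l)))"

text \<open>Weights p_n (the index n is the number of leaves of the argument).\<close>

fun pw :: "mtree \<Rightarrow> real" where
  "pw Leaf = 1"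
| "pw (Node l r) = (1 / (real (leaves l + leaves r) - 1)) * pw l * pw r"

end

theory Submission
  imports Defs "HOL-Library.Countable"
begin


lemma leaves_pos: "leaves s \<ge> 1"
  by (induction s) auto

lemma pw_pos: "pw s > 0"
proof (induction s)
  case (Node l r)
  have "real (leaves l + leaves r) - 1 > 0" using leaves_pos[of l] leaves_pos[of r] by simp
  with Node show ?case by simp
qed simp

lemma leaves_germ: "leaves (germ s k) = Suc (leaves s)"
  by (induction s arbitrary: k) auto

lemma germ_inj: "k \<in> {1..leaves s} \<Longrightarrow> k' \<in> {1..leaves s} \<Longrightarrow> germ s k = germ s k' \<Longrightarrow> k = k'"
proof (induction s arbitrary: k k')
  case (Node l r)
  show ?case
  proof (cases "k \<le> leaves l"; cases "k' \<le> leaves l")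
    assume a: "k \<le> leaves l" "k' \<le> leaves l"
    with Node show ?thesis by auto
  next
    assume a: "\<not> k \<le> leaves l" "\<not> k' \<le> leaves l"
    with Node.prems have "germ r (k - leaves l) = germ r (k' - leaves l)" by auto
    moreover have "k - leaves l \<in> {1..leaves r}" "k' - leaves l \<in> {1..leaves r}"
      using a Node.prems by auto
    ultimately have "k - leaves l = k' - leaves l" using Node.IH(2) by blast
    with a show ?thesis by simp
  next
    assume a: "k \<le> leaves l" "\<not> k' \<le> leaves l"
    with Node.prems have "germ l k = l" by auto
    hence False using leaves_germ[of l k] by simp
    thus ?thesis ..
  next
    assume a: "\<not> k \<le> leaves l" "k' \<le> leaves l"
    with Node.prems have "germ l k' = l" by auto
    hence False using leaves_germ[of l k'] by simp
    thus ?thesis ..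
  qed
qed simp

fun ungerm :: "mtree \<Rightarrow> (mtree \<times> nat) list" where
  "ungerm Leaf = []"
| "ungerm (Node l r) = (if l = Leaf \<and> r = Leaf then [(Leaf, 1)] else
     map (\<lambda>(s,k). (Node s r, k)) (ungerm l) @ map (\<lambda>(s,k). (Node l s, k + leaves l)) (ungerm r))"

lemma ungerm_sound: "(s,k) \<in> set (ungerm t) \<Longrightarrow> 1 \<le> k \<and> k \<le> leaves s \<and> germ s k = t"
proof (induction t arbitrary: s k)
  case (Node l r)
  show ?case
  proof (cases "l = Leaf \<and> r = Leaf")
    case True then show ?thesis using Node.prems by auto
  next
    case False
    with Node.prems consider (a) s0 where "(s0,k) \<in> set (ungerm l)" "s = Node s0 r"
      | (b) s0 k0 where "(s0,k0) \<in> set (ungerm r)" "s = Node l s0" "k = k0 + leaves l"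
      by auto
    then show ?thesis
    proof cases
      case a with Node.IH(1)[OF a(1)] show ?thesis by auto
    next
      case b with Node.IH(2)[OF b(1)] show ?thesis by auto
    qed
  qed
qed simp

lemma germ_not_Leaf: "germ s k \<noteq> Leaf"
  by (cases s) auto

lemma ungerm_complete: "1 \<le> k \<Longrightarrow> k \<le> leaves s \<Longrightarrow> (s,k) \<in> set (ungerm (germ s k))"
proof (induction s arbitrary: k)
  case Leaf then show ?case by simp
next
  case (Node l r)
  show ?case
  proof (cases "k \<le> leaves l")
    case True
    have "germ l k \<noteq> Leaf" by (rule germ_not_Leaf)
    with True Node show ?thesis by force
  next
    case False
    have "germ r (k - leaves l) \<noteq> Leaf" by (rule germ_not_Leaf)
    moreover have "(r, k - leaves l) \<in> set (ungerm (germ r (k - leaves l)))"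
      using Node False by auto
    ultimately show ?thesis using False
      by (auto intro!: image_eqI[where x="(r, k - leaves l)"])
  qed
qed

lemma ungerm_leaves: "x \<in> set (ungerm t) \<Longrightarrow> Suc (leaves (fst x)) = leaves t"
  using ungerm_sound[of "fst x" "snd x" t] leaves_germ by auto

lemma ungerm_distinct: "distinct (ungerm t)"
proof (induction t)
  case (Node l r)
  have d1: "distinct (map (\<lambda>(s,k). (Node s r, k)) (ungerm l))"
    using Node.IH(1) by (auto simp: distinct_map inj_on_def)
  have d2: "distinct (map (\<lambda>(s,k). (Node l s, k + leaves l)) (ungerm r))"
    using Node.IH(2) by (auto simp: distinct_map inj_on_def)
  have d3: "set (map (\<lambda>(s,k). (Node s r, k)) (ungerm l)) \<inter> set (map (\<lambda>(s,k). (Node l s, k + leaves l)) (ungerm r)) = {}"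
    using ungerm_leaves[of _ l] by fastforce
  show ?case using d1 d2 d3 by simp
qed simp

lemma leaves_one: assumes "leaves s = Suc 0" shows "s = Leaf"
proof (cases s)
  case (Node l r)
  then have False using assms leaves_pos[of l] leaves_pos[of r] by simp
  thus ?thesis ..
qed simp

lemma ungerm_sum: "(\<Sum>x\<leftarrow>ungerm t. pw (fst x)) = (real (leaves t) - 1) * pw t"
proof (induction t)
  case (Node l r)
  show ?case
  proof (cases "l = Leaf \<and> r = Leaf")
    case True then show ?thesis by simp
  next
    case False
    define a where "a = leaves l"
    define b where "b = leaves r"
    have a1: "a \<ge> 1" unfolding a_def by (rule leaves_pos)
    have b1: "b \<ge> 1" unfolding b_def by (rule leaves_pos)
    have ab: "a + b > 2"
    proof (rule ccontr)
      assume "\<not> a + b > 2"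
      hence "a = 1" "b = 1" using a1 b1 by auto
      hence "l = Leaf" "r = Leaf" using leaves_one unfolding a_def b_def by auto
      with False show False by simp
    qed
    have rab: "real (a + b) - 2 > 0" using ab by simp
    have s1: "(\<Sum>x\<leftarrow>map (\<lambda>(s,k). (Node s r, k)) (ungerm l). pw (fst x))
        = (\<Sum>x\<leftarrow>ungerm l. pw (fst x) * (pw r / (real (a + b) - 2)))"
      unfolding map_map
    proof (rule arg_cong[where f=sum_list], rule map_cong, rule refl)
      fix x assume x: "x \<in> set (ungerm l)"
      obtain s k where xs: "x = (s,k)" by (cases x)
      have "Suc (leaves s) = a" using ungerm_leaves[OF x] xs a_def by simp
      hence "real (leaves s + leaves r) - 1 = real (a + b) - 2" unfolding b_def by simp
      thus "((\<lambda>x. pw (fst x)) \<circ> (\<lambda>(s, k). (Node s r, k))) x = pw (fst x) * (pw r / (real (a + b) - 2))"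
        using xs by simp
    qed
    have s2: "(\<Sum>x\<leftarrow>map (\<lambda>(s,k). (Node l s, k + leaves l)) (ungerm r). pw (fst x))
        = (\<Sum>x\<leftarrow>ungerm r. pw (fst x) * (pw l / (real (a + b) - 2)))"
      unfolding map_map
    proof (rule arg_cong[where f=sum_list], rule map_cong, rule refl)
      fix x assume x: "x \<in> set (ungerm r)"
      obtain s k where xs: "x = (s,k)" by (cases x)
      have "Suc (leaves s) = b" using ungerm_leaves[OF x] xs b_def by simp
      hence eq: "real (leaves l) + real (leaves s) - 1 = real a + real b - 2" unfolding a_def by simp
      show "((\<lambda>x. pw (fst x)) \<circ> (\<lambda>(s, k). (Node l s, k + leaves l))) x = pw (fst x) * (pw l / (real (a + b) - 2))"
        using xs eq by (simp add: mult.commute)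
    qed
    have "(\<Sum>x\<leftarrow>ungerm (Node l r). pw (fst x))
       = (\<Sum>x\<leftarrow>map (\<lambda>(s,k). (Node s r, k)) (ungerm l). pw (fst x))
         + (\<Sum>x\<leftarrow>map (\<lambda>(s,k). (Node l s, k + leaves l)) (ungerm r). pw (fst x))"
      using False by (simp only: ungerm.simps if_False map_append sum_list_append)
    also have "\<dots> = (\<Sum>x\<leftarrow>ungerm l. pw (fst x)) * (pw r / (real (a + b) - 2))
        + (\<Sum>x\<leftarrow>ungerm r. pw (fst x)) * (pw l / (real (a + b) - 2))"
      unfolding s1 s2 by (simp only: sum_list_mult_const)
    also have "\<dots> = (real a - 1) * pw l * (pw r / (real (a + b) - 2)) + (real b - 1) * pw r * (pw l / (real (a + b) - 2))"
      using Node.IH unfolding a_def b_def by simp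
    also have "\<dots> = pw l * pw r * ((real a - 1 + (real b - 1)) / (real (a + b) - 2))"
      by (simp only: divide_inverse algebra_simps)
    also have "\<dots> = pw l * pw r" using rab by simp
    also have "\<dots> = (real (leaves (Node l r)) - 1) * pw (Node l r)"
      using rab unfolding a_def b_def by simp
    finally show ?thesis .
  qed
qed simp


instance mtree :: countable by countable_datatype

theorem lemma3:
  fixes P :: "real \<Rightarrow> 'a measure"
    and \<tau> :: "nat \<Rightarrow> 'a \<Rightarrow> mtree"
  assumes prob: "\<And>t. t \<ge> 0 \<Longrightarrow> prob_space (P t)"
    and meas: "\<And>t n s. t \<ge> 0 \<Longrightarrow> {\<omega> \<in> space (P t). \<tau> n \<omega> = s} \<in> sets (P t)"
    and in_T: "\<And>t n \<omega>. t \<ge> 0 \<Longrightarrow> n \<ge> 1 \<Longrightarrow> \<omega> \<in> space (P t) \<Longrightarrow> \<tau> n \<omega> \<in> McKean_trees n"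
    and init: "\<And>t. t \<ge> 0 \<Longrightarrow> measure (P t) {\<omega> \<in> space (P t). \<tau> 1 \<omega> = Leaf} = 1"
    and step_germ: "\<And>t n s k. t \<ge> 0 \<Longrightarrow> n \<ge> 1 \<Longrightarrow> s \<in> McKean_trees n \<Longrightarrow>
        measure (P t) {\<omega> \<in> space (P t). \<tau> n \<omega> = s} > 0 \<Longrightarrow> k \<in> {1..n} \<Longrightarrow>
        measure (P t) {\<omega> \<in> space (P t). \<tau> (Suc n) \<omega> = germ s k \<and> \<tau> n \<omega> = s}
          / measure (P t) {\<omega> \<in> space (P t). \<tau> n \<omega> = s} = 1 / real n"
    and step_other: "\<And>t n s u. t \<ge> 0 \<Longrightarrow> n \<ge> 1 \<Longrightarrow> s \<in> McKean_trees n \<Longrightarrow>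
        measure (P t) {\<omega> \<in> space (P t). \<tau> n \<omega> = s} > 0 \<Longrightarrow> u \<notin> germ s ` {1..n} \<Longrightarrow>
        measure (P t) {\<omega> \<in> space (P t). \<tau> (Suc n) \<omega> = u \<and> \<tau> n \<omega> = s}
          / measure (P t) {\<omega> \<in> space (P t). \<tau> n \<omega> = s} = 0"
  shows "\<forall>t\<ge>0. \<forall>n\<ge>1. \<forall>s\<in>McKean_trees n.
           pw s = measure (P t) {\<omega> \<in> space (P t). \<tau> n \<omega> = s}"
  proof (intro allI impI ballI)
  fix t :: real and n s
  assume t: "t \<ge> 0" and n: "n \<ge> 1" and s: "s \<in> McKean_trees n"
  interpret prob_space "P t" using prob t by auto
  let ?q = "\<lambda>n s. measure (P t) {\<omega> \<in> space (P t). \<tau> n \<omega> = s}"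
  have main: "\<forall>s. leaves s = m \<longrightarrow> pw s = ?q m s" if "m \<ge> 1" for m
    using that
  proof (induction m rule: nat_induct_at_least)
    case base
    show ?case
    proof (intro allI impI)
      fix s assume "leaves s = 1"
      hence "s = Leaf" using leaves_one by simp
      thus "pw s = ?q 1 s" using init[OF t] by simp
    qed
  next
    case (Suc n)
    note n1 = Suc.hyps and IH = Suc.IH
    show ?case
    proof (intro allI impI)
      fix s' assume ls': "leaves s' = Suc n"
      define E where "E = (\<lambda>s. {\<omega> \<in> space (P t). \<tau> (Suc n) \<omega> = s' \<and> \<tau> n \<omega> = s})"
      define U where "U = ungerm s'"
      define S0 where "S0 = fst ` set U"
      have Esets: "E s \<in> sets (P t)" for s
      proof -
        have "E s = {\<omega> \<in> space (P t). \<tau> (Suc n) \<omega> = s'} \<inter> {\<omega> \<in> space (P t). \<tau> n \<omega> = s}"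
          unfolding E_def by auto
        thus ?thesis using meas[OF t] by auto
      qed
      have qpos: "?q n s > 0" if "leaves s = n" for s
        using IH that pw_pos[of s] by simp
      have Es_val: "measure (P t) (E s) = pw s / real n" if sS: "s \<in> S0" for s
      proof -
        obtain k where sk: "(s,k) \<in> set U" using sS unfolding S0_def by force
        have g: "1 \<le> k" "k \<le> leaves s" "germ s k = s'" using ungerm_sound[of s k s'] sk U_def by auto
        have ls: "leaves s = n" using ungerm_leaves[of "(s,k)" s'] sk U_def ls' by simp
        have "measure (P t) {\<omega> \<in> space (P t). \<tau> (Suc n) \<omega> = germ s k \<and> \<tau> n \<omega> = s} / ?q n s = 1 / real n"
          using step_germ[OF t n1, of s k] qpos[OF ls] ls g by (simp add: McKean_trees_def)
        hence "measure (P t) (E s) / ?q n s = 1 / real n" unfolding E_def using g by simp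
        hence "measure (P t) (E s) = ?q n s / real n" using qpos[OF ls] n1
          by (simp add: field_simps)
        thus ?thesis using IH ls by simp
      qed
      have Es_null: "E s \<in> null_sets (P t)" if ls: "leaves s = n" and nS: "s \<notin> S0" for s
      proof -
        have "s' \<notin> germ s ` {1..n}"
        proof
          assume "s' \<in> germ s ` {1..n}"
          then obtain k where k: "k \<in> {1..n}" "s' = germ s k" by auto
          hence "(s,k) \<in> set U" using ungerm_complete[of k s] ls U_def by auto
          thus False using nS unfolding S0_def by force
        qed
        hence "measure (P t) (E s) / ?q n s = 0"
          using step_other[OF t n1, of s s'] qpos[OF ls] ls unfolding E_def by (simp add: McKean_trees_def)
        hence "measure (P t) (E s) = 0" using qpos[OF ls] by simp
        thus ?thesis using Esets[of s] by (auto simp: emeasure_eq_measure)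
      qed
      have dec: "{\<omega> \<in> space (P t). \<tau> (Suc n) \<omega> = s'} = (\<Union>s\<in>S0. E s) \<union> (\<Union>s\<in>McKean_trees n - S0. E s)"
        using in_T[OF t n1] unfolding E_def by auto
      have N: "(\<Union>s\<in>McKean_trees n - S0. E s) \<in> null_sets (P t)"
        by (rule null_sets_UN') (auto intro: Es_null simp: McKean_trees_def)
      have fS0: "finite S0" unfolding S0_def by simp
      have A: "(\<Union>s\<in>S0. E s) \<in> sets (P t)" using fS0 Esets by auto
      have "?q (Suc n) s' = measure (P t) (\<Union>s\<in>S0. E s)"
        unfolding dec using measure_Un_null_set[OF A N] .
      also have "\<dots> = (\<Sum>s\<in>S0. measure (P t) (E s))"
        by (rule measure_finite_Union[OF fS0]) (use Esets in \<open>auto simp: disjoint_family_on_def E_def\<close>)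
      also have "\<dots> = (\<Sum>s\<in>S0. pw s / real n)" using Es_val by simp
      also have "\<dots> = (\<Sum>x\<in>set U. pw (fst x) / real n)"
      proof -
        have "inj_on fst (set U)"
        proof (rule inj_onI)
          fix x y assume x: "x \<in> set U" and y: "y \<in> set U" and e: "fst x = fst y"
          obtain s k where xs: "x = (s,k)" by (cases x)
          obtain k' where ys: "y = (s,k')" using e xs by (cases y) auto
          have "1 \<le> k" "k \<le> leaves s" "germ s k = s'" using ungerm_sound[of s k s'] x xs U_def by auto
          moreover have "1 \<le> k'" "k' \<le> leaves s" "germ s k' = s'" using ungerm_sound[of s k' s'] y ys U_def by auto
          ultimately have "k = k'" using germ_inj[of k s k'] by auto
          thus "x = y" using xs ys by simp
        qed
        thus ?thesis unfolding S0_def by (simp add: sum.reindex)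
      qed
      also have "\<dots> = (\<Sum>x\<in>set U. pw (fst x)) / real n" by (simp add: sum_divide_distrib)
      also have "\<dots> = (\<Sum>x\<leftarrow>U. pw (fst x)) / real n"
        using ungerm_distinct[of s'] U_def by (simp add: sum.distinct_set_conv_list)
      also have "\<dots> = pw s'" using ungerm_sum[of s'] U_def ls' n1 by simp
      finally show "pw s' = ?q (Suc n) s'" by simp
    qed
  qed
  show "pw s = ?q n s" using main[OF n] s by (simp add: McKean_trees_def)
qed

end
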